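(* Let $m,n,d$ be positive integers and let $w_1,w_2$ be positive integers with $w_1\mid w_2$ and $w_2\mid m$. Then $$A\left(m\frac{w_1}{w_2},\,n\frac{w_2}{w_1},\,w_1,\,d\right)\ge\left\lceil\frac{\binom{m w_1/w_2}{w_1}^{n w_2/w_1}}{\binom{m}{w_2}^n}A(m,n,w_2,d)\right\rceil.$$ Consequently, for all positive integers $m,n,w,d$ with $w\mid m$, $$\frac{\binom{m}{w}^n}{\binom{mn}{wn}}B(mn,nw,d)\le A(m,n,w,d)\le\frac{\binom{m}{w}^n}{\left(\frac{m}{w}\right)^{nw}}C\left(\frac{m}{w},nw,d\right).$$
   Context: $J(m,w)$ denotes the set of binary vectors of length $m$ and Hamming weight $w$. Elements of $J(m,w)^n$ are identified with $m\times n$ binary matrices all of whose columns have weight $w$, with binary Hamming distance. $A(m,n,w,d)$ is the maximum cardinality of a nonempty subset of $J(m,w)^n$ with pairwise Hamming distances at least $2d$. $B(N,W,d)$ is the maximum cardinality of a nonempty subset of $J(N,W)$ with pairwise Hamming distances at least $2d$. $C(q,n,d)$ is the maximum cardinality of a nonempty subset of $[q]^n$, $[q]=\{0,\dots,q-1\}$, with pairwise Hamming distances (number of differing coordinates) at least $d$. *)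

theory Defs
  imports Complex_Main
begin

text \<open>Binary vectors of length N are encoded by their supports (subsets of {..<N});
binary m x n matrices by their supports (subsets of {..<m} x {..<n}).\<close>

definition hdist :: "'a set \<Rightarrow> 'a set \<Rightarrow> nat" where
  "hdist X Y = card ((X - Y) \<union> (Y - X))"

definition Jset :: "nat \<Rightarrow> nat \<Rightarrow> nat set set" where
  "Jset N W = {x. x \<subseteq> {..<N} \<and> card x = W}"

definition Jmat :: "nat \<Rightarrow> nat \<Rightarrow> nat \<Rightarrow> (nat \<times> nat) set set" where
  "Jmat m n w = {X. X \<subseteq> {..<m} \<times> {..<n} \<and> (\<forall>j<n. card {i. (i, j) \<in> X} = w)}"

definition A_code :: "nat \<Rightarrow> nat \<Rightarrow> nat \<Rightarrow> nat \<Rightarrow> nat" where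
  "A_code m n w d = Max {card S | S. S \<subseteq> Jmat m n w \<and> S \<noteq> {} \<and>
      (\<forall>x\<in>S. \<forall>y\<in>S. x \<noteq> y \<longrightarrow> 2 * d \<le> hdist x y)}"

definition B_code :: "nat \<Rightarrow> nat \<Rightarrow> nat \<Rightarrow> nat" where
  "B_code N W d = Max {card S | S. S \<subseteq> Jset N W \<and> S \<noteq> {} \<and>
      (\<forall>x\<in>S. \<forall>y\<in>S. x \<noteq> y \<longrightarrow> 2 * d \<le> hdist x y)}"

definition qwords :: "nat \<Rightarrow> nat \<Rightarrow> (nat \<Rightarrow> nat) set" where
  "qwords q n = {f. (\<forall>i<n. f i < q) \<and> (\<forall>i\<ge>n. f i = 0)}"

definition qdist :: "nat \<Rightarrow> (nat \<Rightarrow> nat) \<Rightarrow> (nat \<Rightarrow> nat) \<Rightarrow> nat" where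
  "qdist n f g = card {i. i < n \<and> f i \<noteq> g i}"

definition C_code :: "nat \<Rightarrow> nat \<Rightarrow> nat \<Rightarrow> nat" where
  "C_code q n d = Max {card S | S. S \<subseteq> qwords q n \<and> S \<noteq> {} \<and>
      (\<forall>x\<in>S. \<forall>y\<in>S. x \<noteq> y \<longrightarrow> d \<le> qdist n x y)}"

end

theory Submission
  imports Defs "HOL-Combinatorics.Permutations" "HOL-Library.FuncSet"
begin

lemma hdist_image:
  assumes "inj_on f A" "X \<subseteq> A" "Y \<subseteq> A"
  shows "hdist (f ` X) (f ` Y) = hdist X Y"
proof -
  have "(f ` X - f ` Y) \<union> (f ` Y - f ` X) = f ` ((X - Y) \<union> (Y - X))"
    using assms by (auto simp: inj_on_def)
  moreover have "inj_on f ((X - Y) \<union> (Y - X))" using assms(1) by (rule inj_on_subset) (use assms in auto)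
  ultimately show ?thesis unfolding hdist_def by (simp add: card_image)
qed
lemma perm_exists:
  assumes "finite E" "X \<subseteq> E" "Y \<subseteq> E" "card X = card Y"
  shows "\<exists>p. p permutes E \<and> p ` X = Y"
proof -
  have fX: "finite X" "finite Y" using assms finite_subset by auto
  obtain f where f: "bij_betw f X Y" using finite_same_card_bij[OF fX assms(4)] by blast
  have "card (E - X) = card (E - Y)" using assms fX by (simp add: card_Diff_subset)
  then obtain g where g: "bij_betw g (E - X) (E - Y)"
    using finite_same_card_bij assms by (meson finite_Diff)
  define p where "p = (\<lambda>x. if x \<in> X then f x else if x \<in> E then g x else x)"
  have "bij_betw p X Y" using f by (rule bij_betw_cong[THEN iffD1, rotated]) (simp add: p_def)
  moreover have "bij_betw p (E - X) (E - Y)" using g by (rule bij_betw_cong[THEN iffD1, rotated]) (simp add: p_def)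
  ultimately have "bij_betw p (X \<union> (E - X)) (Y \<union> (E - Y))" by (rule bij_betw_combine) auto
  moreover have "X \<union> (E - X) = E" "Y \<union> (E - Y) = E" using assms by auto
  ultimately have "bij_betw p E E" by simp
  hence "p permutes E" by (rule bij_imp_permutes) (use assms in \<open>auto simp: p_def\<close>)
  moreover have "p ` X = Y" using \<open>bij_betw p X Y\<close> by (simp add: bij_betw_def)
  ultimately show ?thesis by blast
qed

lemma Max_code_ge:
  assumes "finite U" "S \<subseteq> U" "S \<noteq> {}" "P S"
  shows "card S \<le> Max {card S | S. S \<subseteq> U \<and> S \<noteq> {} \<and> P S}"
proof (rule Max_ge)
  show "finite {card S | S. S \<subseteq> U \<and> S \<noteq> {} \<and> P S}"
    by (rule finite_subset[of _ "{..card U}"]) (auto simp: card_mono[OF assms(1)])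
qed (use assms in blast)

lemma Max_code_in:
  assumes "finite U" "S \<subseteq> U" "S \<noteq> {}" "P S"
  shows "\<exists>S. S \<subseteq> U \<and> S \<noteq> {} \<and> P S \<and> card S = Max {card S | S. S \<subseteq> U \<and> S \<noteq> {} \<and> P S}"
proof -
  have "Max {card S | S. S \<subseteq> U \<and> S \<noteq> {} \<and> P S} \<in> {card S | S. S \<subseteq> U \<and> S \<noteq> {} \<and> P S}"
  proof (rule Max_in)
    show "finite {card S | S. S \<subseteq> U \<and> S \<noteq> {} \<and> P S}"
      by (rule finite_subset[of _ "{..card U}"]) (auto simp: card_mono[OF assms(1)])
  qed (use assms in blast)
  thus ?thesis by auto
qed

lemma card_filter_sum: "finite A \<Longrightarrow> card {x\<in>A. P x} = (\<Sum>x\<in>A. if P x then 1 else 0)"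
  by (simp add: sum.inter_filter[symmetric])

lemma averaging:
  fixes Phi :: "('a \<Rightarrow> 'a) set" and U C T :: "'a set set"
  assumes finE: "finite E" and PhiP: "\<And>\<sigma>. \<sigma>\<in>Phi \<Longrightarrow> \<sigma> permutes E"
   and comp: "\<And>\<sigma> \<tau>. \<sigma>\<in>Phi \<Longrightarrow> \<tau>\<in>Phi \<Longrightarrow> \<sigma> \<circ> \<tau> \<in> Phi"
   and invP: "\<And>\<sigma>. \<sigma>\<in>Phi \<Longrightarrow> inv \<sigma> \<in> Phi"
   and UE: "U \<subseteq> Pow E"
   and closed: "\<And>\<sigma> X. \<sigma>\<in>Phi \<Longrightarrow> X\<in>U \<Longrightarrow> \<sigma>`X \<in> U"
   and trans: "\<And>X Y. X\<in>U \<Longrightarrow> Y\<in>U \<Longrightarrow> \<exists>\<sigma>\<in>Phi. \<sigma>`X = Y"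
   and CU: "C \<subseteq> U" and TU: "T \<subseteq> U" and Cne: "C \<noteq> {}"
  shows "\<exists>\<sigma>\<in>Phi. card C * card T \<le> card {X\<in>C. \<sigma>`X \<in> T} * card U"
proof -
  have finPhi: "finite Phi"
    by (rule finite_subset[OF _ finite_permutations[OF finE]]) (use PhiP in auto)
  have finU: "finite U" using UE finE by (meson finite_Pow_iff finite_subset)
  have finC: "finite C" using CU finU finite_subset by auto
  have finT: "finite T" using TU finU finite_subset by auto
  define s where "s X = card {\<sigma>\<in>Phi. \<sigma>`X = X}" for X
  have fiber: "card {\<sigma>\<in>Phi. \<sigma>`X = Y} = s X" if X: "X\<in>U" and Y: "Y\<in>U" for X Y
  proof -
    obtain \<psi> where psi: "\<psi>\<in>Phi" "\<psi>`X = Y" using trans[OF X Y] by blast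
    have pp: "\<psi> permutes E" using PhiP psi(1) .
    have ij: "inj \<psi>" using permutes_inj[OF pp] .
    have ij2: "inj (inv \<psi>)" using permutes_inj[OF permutes_inv[OF pp]] .
    have io: "inv \<psi> \<circ> \<psi> = id" using permutes_inv_o(2)[OF pp] .
    have "card {\<sigma>\<in>Phi. \<sigma>`X = X} \<le> card {\<sigma>\<in>Phi. \<sigma>`X = Y}"
    proof (rule card_inj_on_le[of "\<lambda>\<sigma>. \<psi> \<circ> \<sigma>"])
      show "inj_on ((\<circ>) \<psi>) {\<sigma> \<in> Phi. \<sigma> ` X = X}"
        by (rule inj_onI) (auto simp: fun_eq_iff inj_eq[OF ij])
      show "(\<circ>) \<psi> ` {\<sigma> \<in> Phi. \<sigma> ` X = X} \<subseteq> {\<sigma> \<in> Phi. \<sigma> ` X = Y}"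
      proof
        fix \<tau> assume "\<tau> \<in> (\<circ>) \<psi> ` {\<sigma> \<in> Phi. \<sigma> ` X = X}"
        then obtain \<sigma> where "\<sigma>\<in>Phi" "\<sigma>`X = X" "\<tau> = \<psi> \<circ> \<sigma>" by auto
        moreover have "(\<psi> \<circ> \<sigma>) ` X = \<psi> ` (\<sigma> ` X)" by auto
        ultimately show "\<tau> \<in> {\<sigma> \<in> Phi. \<sigma> ` X = Y}" using comp psi by simp
      qed
      show "finite {\<sigma> \<in> Phi. \<sigma> ` X = Y}" using finPhi by simp
    qed
    moreover have "card {\<sigma>\<in>Phi. \<sigma>`X = Y} \<le> card {\<sigma>\<in>Phi. \<sigma>`X = X}"
    proof (rule card_inj_on_le[of "\<lambda>\<sigma>. inv \<psi> \<circ> \<sigma>"])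
      show "inj_on ((\<circ>) (inv \<psi>)) {\<sigma> \<in> Phi. \<sigma> ` X = Y}"
        by (rule inj_onI) (auto simp: fun_eq_iff inj_eq[OF ij2])
      have "inv \<psi> ` Y = X" by (metis image_inv_f_f ij psi(2))
      then show "(\<circ>) (inv \<psi>) ` {\<sigma> \<in> Phi. \<sigma> ` X = Y} \<subseteq> {\<sigma> \<in> Phi. \<sigma> ` X = X}"
      proof -
        assume iY: "inv \<psi> ` Y = X"
        show ?thesis
        proof
          fix \<tau> assume "\<tau> \<in> (\<circ>) (inv \<psi>) ` {\<sigma> \<in> Phi. \<sigma> ` X = Y}"
          then obtain \<sigma> where "\<sigma>\<in>Phi" "\<sigma>`X = Y" "\<tau> = inv \<psi> \<circ> \<sigma>" by auto
          moreover have "(inv \<psi> \<circ> \<sigma>) ` X = inv \<psi> ` (\<sigma> ` X)" by auto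
          ultimately show "\<tau> \<in> {\<sigma> \<in> Phi. \<sigma> ` X = X}" using comp invP psi iY by simp
        qed
      qed
      show "finite {\<sigma> \<in> Phi. \<sigma> ` X = X}" using finPhi by simp
    qed
    ultimately show ?thesis unfolding s_def by simp
  qed
  have sumA: "card {\<sigma>\<in>Phi. \<sigma>`X \<in> A} = card A * s X" if X: "X\<in>U" and A: "A \<subseteq> U" for X A
  proof -
    have finA: "finite A" using A finU finite_subset by auto
    have "{\<sigma>\<in>Phi. \<sigma>`X \<in> A} = (\<Union>Y\<in>A. {\<sigma>\<in>Phi. \<sigma>`X = Y})" by auto
    then have "card {\<sigma>\<in>Phi. \<sigma>`X \<in> A} = (\<Sum>Y\<in>A. card {\<sigma>\<in>Phi. \<sigma>`X = Y})"
      using finA finPhi by (simp only:) (rule card_UN_disjoint, auto)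
    also have "\<dots> = (\<Sum>Y\<in>A. s X)" using fiber X A by (intro sum.cong) auto
    finally show ?thesis by simp
  qed
  have sPhi: "card Phi = card U * s X" if X: "X \<in> U" for X
  proof -
    have "{\<sigma>\<in>Phi. \<sigma>`X \<in> U} = Phi" using closed X by auto
    thus ?thesis using sumA[OF X order_refl] by simp
  qed
  have "(\<Sum>\<sigma>\<in>Phi. card {X\<in>C. \<sigma>`X \<in> T}) = (\<Sum>\<sigma>\<in>Phi. \<Sum>X\<in>C. if \<sigma>`X \<in> T then 1 else 0)"
    using finC by (simp add: card_filter_sum)
  also have "\<dots> = (\<Sum>X\<in>C. \<Sum>\<sigma>\<in>Phi. if \<sigma>`X \<in> T then 1 else 0)" by (rule sum.swap)
  also have "\<dots> = (\<Sum>X\<in>C. card T * s X)"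
    using finPhi sumA TU CU by (intro sum.cong) (auto simp: card_filter_sum[symmetric])
  finally have S: "(\<Sum>\<sigma>\<in>Phi. card {X\<in>C. \<sigma>`X \<in> T}) * card U = (\<Sum>X\<in>C. card T * card Phi)"
  proof -
    assume h: "(\<Sum>\<sigma>\<in>Phi. card {X\<in>C. \<sigma>`X \<in> T}) = (\<Sum>X\<in>C. card T * s X)"
    have "(\<Sum>X\<in>C. card T * s X * card U) = (\<Sum>X\<in>C. card T * card Phi)"
    proof (rule sum.cong)
      fix X assume "X \<in> C"
      hence "card Phi = card U * s X" using sPhi CU by auto
      thus "card T * s X * card U = card T * card Phi" by simp
    qed simp
    thus ?thesis using h by (simp add: sum_distrib_right)
  qed
  obtain X0 where "X0 \<in> C" using Cne by blast
  then obtain \<sigma>0 where "\<sigma>0 \<in> Phi" using trans CU by blast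
  hence Pne: "Phi \<noteq> {}" by blast
  show ?thesis
  proof (rule ccontr)
    assume "\<not> ?thesis"
    hence lt: "\<And>\<sigma>. \<sigma>\<in>Phi \<Longrightarrow> card {X\<in>C. \<sigma>`X \<in> T} * card U < card C * card T" by auto
    have "(\<Sum>\<sigma>\<in>Phi. card {X\<in>C. \<sigma>`X \<in> T} * card U) < (\<Sum>\<sigma>\<in>Phi. card C * card T)"
      by (rule sum_strict_mono[OF finPhi Pne lt])
    also have "\<dots> = (\<Sum>X\<in>C. card T * card Phi)" by simp
    finally show False using S by (simp add: sum_distrib_right)
  qed
qed

lemma code_transfer:
  fixes Phi :: "('a \<Rightarrow> 'a) set" and U C T :: "'a set set"
  assumes finE: "finite E" and PhiP: "\<And>\<sigma>. \<sigma>\<in>Phi \<Longrightarrow> \<sigma> permutes E"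
   and comp: "\<And>\<sigma> \<tau>. \<sigma>\<in>Phi \<Longrightarrow> \<tau>\<in>Phi \<Longrightarrow> \<sigma> \<circ> \<tau> \<in> Phi"
   and invP: "\<And>\<sigma>. \<sigma>\<in>Phi \<Longrightarrow> inv \<sigma> \<in> Phi"
   and UE: "U \<subseteq> Pow E"
   and closed: "\<And>\<sigma> X. \<sigma>\<in>Phi \<Longrightarrow> X\<in>U \<Longrightarrow> \<sigma>`X \<in> U"
   and trans: "\<And>X Y. X\<in>U \<Longrightarrow> Y\<in>U \<Longrightarrow> \<exists>\<sigma>\<in>Phi. \<sigma>`X = Y"
   and CU: "C \<subseteq> U" and TU: "T \<subseteq> U" and Cne: "C \<noteq> {}"
   and code: "\<forall>x\<in>C. \<forall>y\<in>C. x \<noteq> y \<longrightarrow> 2 * d \<le> hdist x y"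
  shows "\<exists>D. D \<subseteq> T \<and> card C * card T \<le> card D * card U \<and>
           (\<forall>x\<in>D. \<forall>y\<in>D. x \<noteq> y \<longrightarrow> 2 * d \<le> hdist x y)"
proof -
  obtain \<sigma> where s: "\<sigma>\<in>Phi" and le: "card C * card T \<le> card {X\<in>C. \<sigma>`X \<in> T} * card U"
    using averaging[OF finE PhiP comp invP UE closed trans CU TU Cne] by blast
  have ij: "inj \<sigma>" using permutes_inj[OF PhiP[OF s]] .
  have iji: "inj (image \<sigma>)" using ij by (simp add: inj_image_eq_iff inj_def)
  define D where "D = image \<sigma> ` {X\<in>C. \<sigma>`X \<in> T}"
  have "card D = card {X\<in>C. \<sigma>`X \<in> T}" unfolding D_def
    by (rule card_image) (rule inj_on_subset[OF iji], simp)
  moreover have "D \<subseteq> T" unfolding D_def by auto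
  moreover have "\<forall>x\<in>D. \<forall>y\<in>D. x \<noteq> y \<longrightarrow> 2 * d \<le> hdist x y"
  proof (intro ballI impI)
    fix x y assume "x \<in> D" "y \<in> D" "x \<noteq> y"
    then obtain X Y where "X \<in> C" "Y \<in> C" "x = \<sigma>`X" "y = \<sigma>`Y" unfolding D_def by auto
    moreover have "hdist (\<sigma>`X) (\<sigma>`Y) = hdist X Y"
      by (rule hdist_image[of \<sigma> UNIV]) (use ij in auto)
    ultimately show "2 * d \<le> hdist x y" using code \<open>x \<noteq> y\<close> by auto
  qed
  ultimately show ?thesis using le by metis
qed

lemma card_pullback:
  assumes "inj_on F V" "D \<subseteq> F ` V"
  shows "card {v\<in>V. F v \<in> D} = card D"
proof -
  have "F ` {v\<in>V. F v \<in> D} = D" using assms(2) by auto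
  moreover have "inj_on F {v\<in>V. F v \<in> D}" by (rule inj_on_subset[OF assms(1)]) auto
  ultimately show ?thesis using card_image by metis
qed

lemma finite_Jset: "finite (Jset N W)"
  unfolding Jset_def by (rule finite_subset[of _ "Pow {..<N}"]) auto

lemma card_Jset: "card (Jset N W) = N choose W"
  unfolding Jset_def using n_subsets[of "{..<N}" W] by simp

lemma finite_Jmat: "finite (Jmat m n w)"
  unfolding Jmat_def by (rule finite_subset[of _ "Pow ({..<m} \<times> {..<n})"]) auto

lemma card_Jmat: "card (Jmat m n w) = (m choose w) ^ n"
proof -
  define g where "g X = (\<lambda>j\<in>{..<n}. {i. (i,j)\<in>X})" for X :: "(nat \<times> nat) set"
  have "bij_betw g (Jmat m n w) (PiE {..<n} (\<lambda>_. Jset m w))"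
  proof (rule bij_betw_imageI)
    show "inj_on g (Jmat m n w)"
    proof (rule inj_onI)
      fix X Y assume X: "X \<in> Jmat m n w" and Y: "Y \<in> Jmat m n w" and e: "g X = g Y"
      have "\<And>i j. j < n \<Longrightarrow> ((i,j)\<in>X) = ((i,j)\<in>Y)"
      proof -
        fix i j assume "j < n"
        hence "g X j = g Y j" using e by simp
        thus "((i,j)\<in>X) = ((i,j)\<in>Y)" using \<open>j<n\<close> unfolding g_def by auto
      qed
      thus "X = Y" using X Y unfolding Jmat_def by auto
    qed
    show "g ` Jmat m n w = PiE {..<n} (\<lambda>_. Jset m w)"
    proof
      show "g ` Jmat m n w \<subseteq> PiE {..<n} (\<lambda>_. Jset m w)"
        unfolding g_def Jmat_def Jset_def by auto
      show "PiE {..<n} (\<lambda>_. Jset m w) \<subseteq> g ` Jmat m n w"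
      proof
        fix f assume f: "f \<in> PiE {..<n} (\<lambda>_. Jset m w)"
        define X where "X = {(i,j). j < n \<and> i \<in> f j}"
        have "X \<in> Jmat m n w" using f unfolding X_def Jmat_def Jset_def by (auto simp: PiE_iff)
        moreover have "g X = f"
        proof
          fix j show "g X j = f j"
            using f unfolding g_def X_def by (cases "j < n") (auto simp: PiE_iff extensional_def)
        qed
        ultimately show "f \<in> g ` Jmat m n w" by blast
      qed
    qed
  qed
  hence "card (Jmat m n w) = card (PiE {..<n} (\<lambda>_. Jset m w))" by (rule bij_betw_same_card)
  also have "\<dots> = (m choose w) ^ n" by (simp add: card_PiE card_Jset)
  finally show ?thesis .
qed

lemma finite_qwords: "finite (qwords q n)"
proof -
  have "qwords q n \<subseteq> (\<lambda>f i. if i < n then f i else 0) ` PiE {..<n} (\<lambda>_. {..<q})"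
  proof
    fix f assume f: "f \<in> qwords q n"
    have "f = (\<lambda>i. if i < n then restrict f {..<n} i else 0)"
      using f unfolding qwords_def by auto
    moreover have "restrict f {..<n} \<in> PiE {..<n} (\<lambda>_. {..<q})" using f unfolding qwords_def by auto
    ultimately show "f \<in> (\<lambda>f i. if i < n then f i else 0) ` PiE {..<n} (\<lambda>_. {..<q})" by blast
  qed
  thus ?thesis by (rule finite_subset) (simp add: finite_PiE)
qed

lemma card_qwords: "card (qwords q n) = q ^ n"
proof -
  have "bij_betw (\<lambda>f. restrict f {..<n}) (qwords q n) (PiE {..<n} (\<lambda>_. {..<q}))"
  proof (rule bij_betw_imageI)
    show "inj_on (\<lambda>f. restrict f {..<n}) (qwords q n)"
    proof (rule inj_onI)
      fix f g assume "f \<in> qwords q n" "g \<in> qwords q n" "restrict f {..<n} = restrict g {..<n}"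
      thus "f = g" unfolding qwords_def by (auto simp: fun_eq_iff restrict_def split: if_splits) (metis not_le)
    qed
    show "(\<lambda>f. restrict f {..<n}) ` qwords q n = PiE {..<n} (\<lambda>_. {..<q})"
    proof
      show "(\<lambda>f. restrict f {..<n}) ` qwords q n \<subseteq> PiE {..<n} (\<lambda>_. {..<q})"
        unfolding qwords_def by (intro image_subsetI) (simp add: restrict_PiE_iff)
      show "PiE {..<n} (\<lambda>_. {..<q}) \<subseteq> (\<lambda>f. restrict f {..<n}) ` qwords q n"
      proof
        fix f assume f: "f \<in> PiE {..<n} (\<lambda>_. {..<q})"
        define h where "h = (\<lambda>i. if i < n then f i else 0)"
        have "h \<in> qwords q n" using f unfolding h_def qwords_def by auto
        moreover have "restrict h {..<n} = f"
          using f unfolding h_def by (auto simp: fun_eq_iff PiE_iff extensional_def)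
        ultimately show "f \<in> (\<lambda>f. restrict f {..<n}) ` qwords q n" by blast
      qed
    qed
  qed
  hence "card (qwords q n) = card (PiE {..<n} (\<lambda>_. {..<q}))" by (rule bij_betw_same_card)
  also have "\<dots> = q ^ n" by (simp add: card_PiE)
  finally show ?thesis .
qed

lemma col_card: "card {i. (i,j)\<in>X} = card {p\<in>X. snd p = j}"
proof -
  have "(\<lambda>i. (i,j)) ` {i. (i,j)\<in>X} = {p\<in>X. snd p = j}" by force
  moreover have "inj_on (\<lambda>i. (i,j)) {i. (i,j)\<in>X}" by (auto simp: inj_on_def)
  ultimately show ?thesis using card_image by metis
qed

definition PhiM :: "nat \<Rightarrow> nat \<Rightarrow> ((nat \<times> nat) \<Rightarrow> (nat \<times> nat)) set" where
  "PhiM m n = {\<sigma>. \<sigma> permutes ({..<m} \<times> {..<n}) \<and> (\<forall>p. snd (\<sigma> p) = snd p)}"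

lemma PhiM_comp: "\<sigma> \<in> PhiM m n \<Longrightarrow> \<tau> \<in> PhiM m n \<Longrightarrow> \<sigma> \<circ> \<tau> \<in> PhiM m n"
  unfolding PhiM_def by (simp add: permutes_compose) (metis prod.collapse)

lemma PhiM_inv: assumes "\<sigma> \<in> PhiM m n" shows "inv \<sigma> \<in> PhiM m n"
proof -
  have p: "\<sigma> permutes ({..<m} \<times> {..<n})" and s: "\<forall>p. snd (\<sigma> p) = snd p" using assms unfolding PhiM_def by auto
  have "snd (inv \<sigma> p) = snd p" for p
    using s permutes_inverses(1)[OF p, of p] by metis
  thus ?thesis using permutes_inv[OF p] unfolding PhiM_def by auto
qed

lemma PhiM_closed:
  assumes "\<sigma> \<in> PhiM m n" "X \<in> Jmat m n w"
  shows "\<sigma> ` X \<in> Jmat m n w"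
proof -
  have p: "\<sigma> permutes ({..<m} \<times> {..<n})" and s: "\<forall>p. snd (\<sigma> p) = snd p" using assms(1) unfolding PhiM_def by auto
  have XE: "X \<subseteq> {..<m} \<times> {..<n}" using assms(2) unfolding Jmat_def by auto
  have "\<sigma> ` X \<subseteq> \<sigma> ` ({..<m} \<times> {..<n})" using XE by (rule image_mono)
  hence sub: "\<sigma> ` X \<subseteq> {..<m} \<times> {..<n}" using permutes_image[OF p] by simp
  have "card {i. (i,j) \<in> \<sigma> ` X} = w" if j: "j < n" for j
  proof -
    have "{q\<in>\<sigma> ` X. snd q = j} = \<sigma> ` {q\<in>X. snd q = j}" using s by auto
    hence "card {q\<in>\<sigma> ` X. snd q = j} = card {q\<in>X. snd q = j}"
      using card_image[OF inj_on_subset[OF permutes_inj[OF p] subset_UNIV]] by metis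
    thus ?thesis using assms(2) j unfolding Jmat_def by (simp add: col_card)
  qed
  thus ?thesis using sub unfolding Jmat_def by auto
qed

lemma PhiM_trans:
  assumes X: "X \<in> Jmat m n w" and Y: "Y \<in> Jmat m n w"
  shows "\<exists>\<sigma>\<in>PhiM m n. \<sigma> ` X = Y"
proof -
  have XE: "X \<subseteq> {..<m} \<times> {..<n}" and YE: "Y \<subseteq> {..<m} \<times> {..<n}"
    and cX: "\<And>j. j<n \<Longrightarrow> card {i. (i,j)\<in>X} = w" and cY: "\<And>j. j<n \<Longrightarrow> card {i. (i,j)\<in>Y} = w"
    using X Y unfolding Jmat_def by auto
  have "\<forall>j. \<exists>\<pi>. j < n \<longrightarrow> \<pi> permutes {..<m} \<and> \<pi> ` {i. (i,j)\<in>X} = {i. (i,j)\<in>Y}"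
  proof
    fix j show "\<exists>\<pi>. j < n \<longrightarrow> \<pi> permutes {..<m} \<and> \<pi> ` {i. (i,j)\<in>X} = {i. (i,j)\<in>Y}"
    proof (cases "j < n")
      case True
      have "\<exists>\<pi>. \<pi> permutes {..<m} \<and> \<pi> ` {i. (i,j)\<in>X} = {i. (i,j)\<in>Y}"
        by (rule perm_exists) (use XE YE cX[OF True] cY[OF True] in auto)
      thus ?thesis by blast
    qed auto
  qed
  then obtain \<pi> where pi: "\<And>j. j < n \<Longrightarrow> \<pi> j permutes {..<m} \<and> \<pi> j ` {i. (i,j)\<in>X} = {i. (i,j)\<in>Y}"
    by metis
  define \<sigma> where "\<sigma> q = (if snd q < n then \<pi> (snd q) (fst q) else fst q, snd q)" for q
  have snd\<sigma>: "\<forall>q. snd (\<sigma> q) = snd q" unfolding \<sigma>_def by simp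
  have "\<sigma> permutes ({..<m} \<times> {..<n})"
  proof (rule bij_imp_permutes)
    show "bij_betw \<sigma> ({..<m} \<times> {..<n}) ({..<m} \<times> {..<n})"
    proof (rule bij_betw_imageI)
      show "inj_on \<sigma> ({..<m} \<times> {..<n})"
      proof (rule inj_onI)
        fix a b assume a: "a \<in> {..<m} \<times> {..<n}" and b: "b \<in> {..<m} \<times> {..<n}" and e: "\<sigma> a = \<sigma> b"
        have sn: "snd a = snd b" using e snd\<sigma> by metis
        have "\<pi> (snd a) (fst a) = \<pi> (snd a) (fst b)" using e a sn unfolding \<sigma>_def by auto
        hence "fst a = fst b" using permutes_inj[of "\<pi> (snd a)" "{..<m}"] pi a by (auto simp: inj_eq)
        thus "a = b" using sn by (simp add: prod_eq_iff)
      qed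
      show "\<sigma> ` ({..<m} \<times> {..<n}) = {..<m} \<times> {..<n}"
      proof
        show "\<sigma> ` ({..<m} \<times> {..<n}) \<subseteq> {..<m} \<times> {..<n}"
        proof
          fix q assume "q \<in> \<sigma> ` ({..<m} \<times> {..<n})"
          then obtain a b where ab: "a < m" "b < n" "q = \<sigma> (a,b)" by auto
          have "\<pi> b a \<in> \<pi> b ` {..<m}" using ab by auto
          hence "\<pi> b a < m" using permutes_image[of "\<pi> b" "{..<m}"] pi ab by auto
          thus "q \<in> {..<m} \<times> {..<n}" using ab unfolding \<sigma>_def by auto
        qed
        show "{..<m} \<times> {..<n} \<subseteq> \<sigma> ` ({..<m} \<times> {..<n})"
        proof
          fix q assume q: "q \<in> {..<m} \<times> {..<n}"
          obtain a b where ab: "q = (a,b)" "a < m" "b < n" using q by auto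
          have "a \<in> \<pi> b ` {..<m}" using permutes_image[of "\<pi> b" "{..<m}"] pi ab by auto
          then obtain a' where "a' < m" "\<pi> b a' = a" by auto
          hence "\<sigma> (a',b) = q" "(a',b) \<in> {..<m} \<times> {..<n}" using ab unfolding \<sigma>_def by auto
          thus "q \<in> \<sigma> ` ({..<m} \<times> {..<n})" by (metis image_eqI)
        qed
      qed
    qed
    fix q assume "q \<notin> {..<m} \<times> {..<n}"
    then show "\<sigma> q = q"
    proof (cases "snd q < n")
      case True
      hence "fst q \<notin> {..<m}" using \<open>q \<notin> _\<close> by (auto simp: mem_Times_iff)
      hence "\<pi> (snd q) (fst q) = fst q" using pi[OF True] permutes_not_in by metis
      thus ?thesis unfolding \<sigma>_def using True by simp
    qed (simp add: \<sigma>_def)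
  qed
  moreover have "\<sigma> ` X = Y"
  proof
    show "\<sigma> ` X \<subseteq> Y"
    proof
      fix q assume "q \<in> \<sigma> ` X"
      then obtain a b where ab: "(a,b) \<in> X" "q = \<sigma> (a,b)" by auto
      have bn: "b < n" using ab XE by auto
      have "\<pi> b a \<in> {i. (i,b)\<in>Y}" using pi[OF bn] ab by blast
      thus "q \<in> Y" using ab bn unfolding \<sigma>_def by simp
    qed
    show "Y \<subseteq> \<sigma> ` X"
    proof
      fix q assume q: "q \<in> Y"
      obtain a b where ab: "q = (a,b)" "b < n" using q YE by auto
      have "a \<in> \<pi> b ` {i. (i,b)\<in>X}" using pi[OF ab(2)] q ab by auto
      then obtain a' where "(a',b) \<in> X" "\<pi> b a' = a" by auto
      hence "\<sigma> (a',b) = q" "(a',b) \<in> X" using ab unfolding \<sigma>_def by auto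
      thus "q \<in> \<sigma> ` X" by (metis image_eqI)
    qed
  qed
  ultimately show ?thesis using snd\<sigma> unfolding PhiM_def by blast
qed

lemma Jset_closed:
  assumes "\<sigma> permutes {..<N}" "X \<in> Jset N W"
  shows "\<sigma> ` X \<in> Jset N W"
proof -
  have "\<sigma> ` X \<subseteq> \<sigma> ` {..<N}" using assms(2) unfolding Jset_def by (intro image_mono) auto
  hence "\<sigma> ` X \<subseteq> {..<N}" using permutes_image[OF assms(1)] by simp
  moreover have "card (\<sigma> ` X) = card X"
    using card_image[OF inj_on_subset[OF permutes_inj[OF assms(1)] subset_UNIV]] by metis
  ultimately show ?thesis using assms(2) unfolding Jset_def by auto
qed

lemma A_ge: "S \<subseteq> Jmat m n w \<Longrightarrow> S \<noteq> {} \<Longrightarrow> \<forall>x\<in>S. \<forall>y\<in>S. x \<noteq> y \<longrightarrow> 2 * d \<le> hdist x y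
   \<Longrightarrow> card S \<le> A_code m n w d"
  unfolding A_code_def by (rule Max_code_ge[where P="\<lambda>S. \<forall>x\<in>S. \<forall>y\<in>S. x \<noteq> y \<longrightarrow> 2 * d \<le> hdist x y"])
    (simp_all add: finite_Jmat)

lemma A_in: "X0 \<in> Jmat m n w \<Longrightarrow> \<exists>S. S \<subseteq> Jmat m n w \<and> S \<noteq> {} \<and>
   (\<forall>x\<in>S. \<forall>y\<in>S. x \<noteq> y \<longrightarrow> 2 * d \<le> hdist x y) \<and> card S = A_code m n w d"
  unfolding A_code_def
  by (rule Max_code_in[where P="\<lambda>S. \<forall>x\<in>S. \<forall>y\<in>S. x \<noteq> y \<longrightarrow> 2 * d \<le> hdist x y" and S="{X0}"])
    (simp_all add: finite_Jmat)

lemma B_ge: "S \<subseteq> Jset N W \<Longrightarrow> S \<noteq> {} \<Longrightarrow> \<forall>x\<in>S. \<forall>y\<in>S. x \<noteq> y \<longrightarrow> 2 * d \<le> hdist x y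
   \<Longrightarrow> card S \<le> B_code N W d"
  unfolding B_code_def by (rule Max_code_ge[where P="\<lambda>S. \<forall>x\<in>S. \<forall>y\<in>S. x \<noteq> y \<longrightarrow> 2 * d \<le> hdist x y"])
    (simp_all add: finite_Jset)

lemma B_in: "X0 \<in> Jset N W \<Longrightarrow> \<exists>S. S \<subseteq> Jset N W \<and> S \<noteq> {} \<and>
   (\<forall>x\<in>S. \<forall>y\<in>S. x \<noteq> y \<longrightarrow> 2 * d \<le> hdist x y) \<and> card S = B_code N W d"
  unfolding B_code_def
  by (rule Max_code_in[where P="\<lambda>S. \<forall>x\<in>S. \<forall>y\<in>S. x \<noteq> y \<longrightarrow> 2 * d \<le> hdist x y" and S="{X0}"])
    (simp_all add: finite_Jset)

lemma C_ge: "S \<subseteq> qwords q N \<Longrightarrow> S \<noteq> {} \<Longrightarrow> \<forall>x\<in>S. \<forall>y\<in>S. x \<noteq> y \<longrightarrow> d \<le> qdist N x y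
   \<Longrightarrow> card S \<le> C_code q N d"
  unfolding C_code_def by (rule Max_code_ge[where P="\<lambda>S. \<forall>x\<in>S. \<forall>y\<in>S. x \<noteq> y \<longrightarrow> d \<le> qdist N x y"])
    (simp_all add: finite_qwords)

lemma Jmat_ne: "w \<le> m \<Longrightarrow> {..<w} \<times> {..<n} \<in> Jmat m n w"
  unfolding Jmat_def by auto

lemma Jset_ne: "W \<le> N \<Longrightarrow> {..<W} \<in> Jset N W"
  unfolding Jset_def by auto

lemma mat_transfer:
  assumes "C \<subseteq> Jmat m n w" "C \<noteq> {}" "\<forall>x\<in>C. \<forall>y\<in>C. x \<noteq> y \<longrightarrow> 2 * d \<le> hdist x y"
    "T \<subseteq> Jmat m n w"
  shows "\<exists>D. D \<subseteq> T \<and> card C * card T \<le> card D * (m choose w) ^ n \<and>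
           (\<forall>x\<in>D. \<forall>y\<in>D. x \<noteq> y \<longrightarrow> 2 * d \<le> hdist x y)"
proof -
  have "\<exists>D. D \<subseteq> T \<and> card C * card T \<le> card D * card (Jmat m n w) \<and>
           (\<forall>x\<in>D. \<forall>y\<in>D. x \<noteq> y \<longrightarrow> 2 * d \<le> hdist x y)"
  proof (rule code_transfer[of "{..<m} \<times> {..<n}" "PhiM m n"])
    show "\<And>\<sigma>. \<sigma> \<in> PhiM m n \<Longrightarrow> \<sigma> permutes {..<m} \<times> {..<n}" unfolding PhiM_def by auto
    show "Jmat m n w \<subseteq> Pow ({..<m} \<times> {..<n})" unfolding Jmat_def by auto
  qed (use assms PhiM_comp PhiM_inv PhiM_closed PhiM_trans in auto)
  thus ?thesis by (simp add: card_Jmat)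
qed

lemma set_transfer:
  assumes "C \<subseteq> Jset N W" "C \<noteq> {}" "\<forall>x\<in>C. \<forall>y\<in>C. x \<noteq> y \<longrightarrow> 2 * d \<le> hdist x y"
    "T \<subseteq> Jset N W"
  shows "\<exists>D. D \<subseteq> T \<and> card C * card T \<le> card D * (N choose W) \<and>
           (\<forall>x\<in>D. \<forall>y\<in>D. x \<noteq> y \<longrightarrow> 2 * d \<le> hdist x y)"
proof -
  have "\<exists>D. D \<subseteq> T \<and> card C * card T \<le> card D * card (Jset N W) \<and>
           (\<forall>x\<in>D. \<forall>y\<in>D. x \<noteq> y \<longrightarrow> 2 * d \<le> hdist x y)"
  proof (rule code_transfer[of "{..<N}" "{\<sigma>. \<sigma> permutes {..<N}}"])
    show "Jset N W \<subseteq> Pow {..<N}" unfolding Jset_def by auto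
    show "\<And>X Y. X \<in> Jset N W \<Longrightarrow> Y \<in> Jset N W \<Longrightarrow> \<exists>\<sigma>\<in>{\<sigma>. \<sigma> permutes {..<N}}. \<sigma> ` X = Y"
      unfolding Jset_def using perm_exists[of "{..<N}"] by auto
  qed (use assms Jset_closed in \<open>auto intro: permutes_compose permutes_inv\<close>)
  thus ?thesis by (simp add: card_Jset)
qed


lemma pull_code:
  assumes inj: "inj_on F A" and V: "V \<subseteq> Pow A" and D: "D \<subseteq> image F ` V"
    and code: "\<forall>x\<in>D. \<forall>y\<in>D. x \<noteq> y \<longrightarrow> 2 * d \<le> hdist x y"
  shows "card {X\<in>V. F`X \<in> D} = card D \<and> (\<forall>x\<in>{X\<in>V. F`X \<in> D}. \<forall>y\<in>{X\<in>V. F`X \<in> D}. x \<noteq> y \<longrightarrow> 2 * d \<le> hdist x y)"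
proof
  have ij: "inj_on (image F) V" using inj_on_subset[OF inj_on_image_Pow[OF inj] V] .
  show "card {X\<in>V. F`X \<in> D} = card D" by (rule card_pullback[OF ij D])
  show "\<forall>x\<in>{X\<in>V. F`X \<in> D}. \<forall>y\<in>{X\<in>V. F`X \<in> D}. x \<noteq> y \<longrightarrow> 2 * d \<le> hdist x y"
  proof (intro ballI impI)
    fix x y assume x: "x \<in> {X\<in>V. F`X \<in> D}" and y: "y \<in> {X\<in>V. F`X \<in> D}" and ne: "x \<noteq> y"
    have "F`x \<noteq> F`y" using inj_onD[OF ij] x y ne by blast
    hence "2 * d \<le> hdist (F`x) (F`y)" using code x y by auto
    moreover have "hdist (F`x) (F`y) = hdist x y" by (rule hdist_image[OF inj]) (use x y V in auto)
    ultimately show "2 * d \<le> hdist x y" by simp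
  qed
qed

lemma card_Jmat_elem:
  assumes "X \<in> Jmat m n w" shows "card X = n * w"
proof -
  have XE: "X \<subseteq> {..<m} \<times> {..<n}" and c: "\<And>j. j<n \<Longrightarrow> card {i. (i,j)\<in>X} = w"
    using assms unfolding Jmat_def by auto
  have finX: "finite X" using XE finite_subset by blast
  have eq: "X = (\<Union>j\<in>{..<n}. {p\<in>X. snd p = j})" using XE by auto
  have "card (\<Union>j\<in>{..<n}. {p\<in>X. snd p = j}) = (\<Sum>j\<in>{..<n}. card {p\<in>X. snd p = j})"
    using finX by (intro card_UN_disjoint) auto
  hence "card X = (\<Sum>j\<in>{..<n}. card {p\<in>X. snd p = j})" using eq by metis
  also have "\<dots> = (\<Sum>j\<in>{..<n}. w)" using c by (intro sum.cong) (auto simp: col_card[symmetric])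
  finally show ?thesis by simp
qed

lemma lower_bound:
  fixes m n w d :: nat
  assumes "0 < m" "0 < n" "0 < w" "w \<le> m"
  shows "real (m choose w) ^ n / real ((m * n) choose (w * n)) * real (B_code (m * n) (n * w) d)
              \<le> real (A_code m n w d)"
proof -
  define F where "F = (\<lambda>(i::nat,j::nat). i + m * j)"
  define A where "A = {..<m} \<times> (UNIV :: nat set)"
  have injF: "inj_on F A"
  proof (rule inj_onI)
    fix p q assume p: "p \<in> A" and q: "q \<in> A" and e: "F p = F q"
    obtain a b a' b' where pq: "p = (a,b)" "q = (a',b')" "a < m" "a' < m" using p q unfolding A_def by auto
    have "(a + m*b) mod m = (a' + m*b') mod m" "(a + m*b) div m = (a' + m*b') div m"
      using e pq unfolding F_def by auto
    thus "p = q" using pq by auto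
  qed
  have nwle: "n * w \<le> m * n" using assms by simp
  have JA: "Jmat m n w \<subseteq> Pow A" unfolding Jmat_def A_def by auto
  define T where "T = image F ` Jmat m n w"
  have TJ: "T \<subseteq> Jset (m * n) (n * w)"
  proof
    fix Y assume "Y \<in> T"
    then obtain X where X: "X \<in> Jmat m n w" "Y = F ` X" unfolding T_def by auto
    have "card Y = card X" using X card_image[OF inj_on_subset[OF injF]] JA by auto
    hence "card Y = n * w" using card_Jmat_elem[OF X(1)] by simp
    moreover have "Y \<subseteq> {..<m * n}"
    proof
      fix y assume "y \<in> Y"
      then obtain i j where ij: "(i,j) \<in> X" "y = i + m * j" using X unfolding F_def by auto
      have "i < m" "j < n" using ij X unfolding Jmat_def by auto
      hence "m * (j + 1) \<le> m * n" by (intro mult_le_mono2) simp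
      thus "y \<in> {..<m * n}" using ij \<open>i < m\<close> by simp
    qed
    ultimately show "Y \<in> Jset (m * n) (n * w)" unfolding Jset_def by simp
  qed
  have cardT: "card T = (m choose w) ^ n"
    unfolding T_def using card_image[OF inj_on_subset[OF inj_on_image_Pow[OF injF] JA]] card_Jmat by simp
  obtain C where C: "C \<subseteq> Jset (m * n) (n * w)" "C \<noteq> {}"
    "\<forall>x\<in>C. \<forall>y\<in>C. x \<noteq> y \<longrightarrow> 2 * d \<le> hdist x y" "card C = B_code (m * n) (n * w) d"
    using B_in[OF Jset_ne[OF nwle], where d=d] by auto
  obtain D where D: "D \<subseteq> T" "card C * card T \<le> card D * ((m * n) choose (n * w))"
    "\<forall>x\<in>D. \<forall>y\<in>D. x \<noteq> y \<longrightarrow> 2 * d \<le> hdist x y"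
    using set_transfer[OF C(1-3) TJ] by blast
  define D' where "D' = {X\<in>Jmat m n w. F`X \<in> D}"
  have DT: "D \<subseteq> image F ` Jmat m n w" using D(1) unfolding T_def .
  note pc = pull_code[OF injF JA DT D(3), folded D'_def]
  have D': "card D' = card D" "\<forall>x\<in>D'. \<forall>y\<in>D'. x \<noteq> y \<longrightarrow> 2 * d \<le> hdist x y"
    using pc by blast+
  have finC: "finite C" using C(1) finite_Jset finite_subset by blast
  have pos: "0 < card C" "0 < card T" using finC C(2) cardT assms by (auto simp: card_gt_0_iff)
  hence "0 < card C * card T" by simp
  hence "0 < card D * ((m * n) choose (n * w))" using D(2) by linarith
  hence "0 < card D" by simp
  hence "D' \<noteq> {}" using D'(1) by auto
  hence Ale: "card D \<le> A_code m n w d" using A_ge[of D' m n w d] D' unfolding D'_def by auto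
  have nw: "n * w = w * n" by simp
  have bpos: "0 < real ((m * n) choose (w * n))" using nwle nw by simp
  have "card C * (m choose w) ^ n \<le> card D * ((m * n) choose (w * n))" using D(2) cardT nw by simp
  hence "real (card C * (m choose w) ^ n) \<le> real (card D * ((m * n) choose (w * n)))"
    by (simp only: of_nat_le_iff)
  hence "real (card C) * real (m choose w) ^ n \<le> real (card D) * real ((m * n) choose (w * n))"
    by simp
  also have "\<dots> \<le> real (A_code m n w d) * real ((m * n) choose (w * n))"
    using Ale by (intro mult_right_mono) auto
  finally have key: "real (m choose w) ^ n * real (card C) \<le> real (A_code m n w d) * real ((m * n) choose (w * n))"
    by (simp add: mult.commute)
  have "real (m choose w) ^ n / real ((m * n) choose (w * n)) * real (card C)
      = (real (m choose w) ^ n * real (card C)) / real ((m * n) choose (w * n))" by simp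
  also have "\<dots> \<le> real (A_code m n w d)" using key bpos by (simp add: pos_divide_le_eq)
  finally show ?thesis using C(4) by simp
qed


lemma divmod_q:
  fixes a b q :: nat assumes "a < q"
  shows "(b * q + a) div q = b" "(b * q + a) mod q = a"
  using assms by auto

lemma tdm: "(t::nat) div w = t' div w \<Longrightarrow> t mod w = t' mod w \<Longrightarrow> t = t'"
  by (metis div_mult_mod_eq)

definition Gw :: "nat \<Rightarrow> nat \<Rightarrow> nat \<Rightarrow> (nat \<Rightarrow> nat) \<Rightarrow> (nat \<times> nat) set" where
  "Gw q w N f = (\<lambda>t. ((t mod w) * q + f t, t div w)) ` {..<N}"

lemma Gw_key:
  assumes f: "f \<in> qwords q N" and g: "g \<in> qwords q N" and t: "t < N"
  shows "((t mod w) * q + f t, t div w) \<in> Gw q w N g \<longleftrightarrow> f t = g t"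
proof
  assume "((t mod w) * q + f t, t div w) \<in> Gw q w N g"
  then obtain t' where t': "t' < N" "(t mod w) * q + f t = (t' mod w) * q + g t'" "t div w = t' div w"
    unfolding Gw_def by auto
  have ft: "f t < q" and gt: "g t' < q" using f g t t' unfolding qwords_def by auto
  from t'(2) have "((t mod w) * q + f t) mod q = ((t' mod w) * q + g t') mod q" by (rule arg_cong)
  hence "f t = g t'" by (simp only: divmod_q(2)[OF ft] divmod_q(2)[OF gt])
  moreover from t'(2) have "((t mod w) * q + f t) div q = ((t' mod w) * q + g t') div q" by (rule arg_cong)
  hence "t mod w = t' mod w" by (simp only: divmod_q(1)[OF ft] divmod_q(1)[OF gt])
  hence "t = t'" using t'(3) using tdm by blast
  ultimately show "f t = g t" by simp
next
  assume "f t = g t" thus "((t mod w) * q + f t, t div w) \<in> Gw q w N g" unfolding Gw_def using t by auto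
qed

lemma Gw_inj_h:
  assumes f: "f \<in> qwords q N"
  shows "inj_on (\<lambda>t. ((t mod w) * q + f t, t div w)) {..<N}"
proof (rule inj_onI)
  fix t t' assume t: "t \<in> {..<N}" and t': "t' \<in> {..<N}" and e: "((t mod w) * q + f t, t div w) = ((t' mod w) * q + f t', t' div w)"
  have ft: "f t < q" and gt: "f t' < q" using f t t' unfolding qwords_def by auto
  have e1: "(t mod w) * q + f t = (t' mod w) * q + f t'" and e2: "t div w = t' div w" using e by simp_all
  from e1 have "((t mod w) * q + f t) div q = ((t' mod w) * q + f t') div q" by (rule arg_cong)
  hence "t mod w = t' mod w" by (simp only: divmod_q(1)[OF ft] divmod_q(1)[OF gt])
  with e2 show "t = t'" by (rule tdm)
qed

lemma Gw_diff:
  assumes f: "f \<in> qwords q N" and g: "g \<in> qwords q N"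
  shows "card (Gw q w N f - Gw q w N g) = qdist N f g"
proof -
  have "Gw q w N f - Gw q w N g = (\<lambda>t. ((t mod w) * q + f t, t div w)) ` {t. t < N \<and> f t \<noteq> g t}"
  proof
    show "Gw q w N f - Gw q w N g \<subseteq> (\<lambda>t. ((t mod w) * q + f t, t div w)) ` {t. t < N \<and> f t \<noteq> g t}"
    proof
      fix x assume x: "x \<in> Gw q w N f - Gw q w N g"
      then obtain t where t: "t < N" "x = ((t mod w) * q + f t, t div w)" unfolding Gw_def by auto
      have "f t \<noteq> g t" using x t Gw_key[OF f g t(1)] by auto
      thus "x \<in> (\<lambda>t. ((t mod w) * q + f t, t div w)) ` {t. t < N \<and> f t \<noteq> g t}" using t by auto
    qed
    show "(\<lambda>t. ((t mod w) * q + f t, t div w)) ` {t. t < N \<and> f t \<noteq> g t} \<subseteq> Gw q w N f - Gw q w N g"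
    proof
      fix x assume "x \<in> (\<lambda>t. ((t mod w) * q + f t, t div w)) ` {t. t < N \<and> f t \<noteq> g t}"
      then obtain t where t: "t < N" "f t \<noteq> g t" "x = ((t mod w) * q + f t, t div w)" by auto
      have "x \<notin> Gw q w N g" using Gw_key[OF f g t(1)] t by auto
      moreover have "x \<in> Gw q w N f" using t unfolding Gw_def by auto
      ultimately show "x \<in> Gw q w N f - Gw q w N g" by auto
    qed
  qed
  moreover have "inj_on (\<lambda>t. ((t mod w) * q + f t, t div w)) {t. t < N \<and> f t \<noteq> g t}"
    by (rule inj_on_subset[OF Gw_inj_h[OF f]]) auto
  ultimately show ?thesis unfolding qdist_def by (simp add: card_image)
qed

lemma Gw_hdist:
  assumes f: "f \<in> qwords q N" and g: "g \<in> qwords q N"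
  shows "hdist (Gw q w N f) (Gw q w N g) = 2 * qdist N f g"
proof -
  have fin: "finite (Gw q w N f)" "finite (Gw q w N g)" unfolding Gw_def by auto
  have "hdist (Gw q w N f) (Gw q w N g) = card (Gw q w N f - Gw q w N g) + card (Gw q w N g - Gw q w N f)"
    unfolding hdist_def by (rule card_Un_disjoint) (use fin in auto)
  also have "\<dots> = qdist N f g + qdist N g f" using Gw_diff[OF f g] Gw_diff[OF g f] by simp
  also have "qdist N g f = qdist N f g" unfolding qdist_def by metis
  finally show ?thesis by simp
qed

lemma Gw_inj: "inj_on (Gw q w N) (qwords q N)"
proof (rule inj_onI)
  fix f g assume f: "f \<in> qwords q N" and g: "g \<in> qwords q N" and e: "Gw q w N f = Gw q w N g"
  have "qdist N f g = 0" using Gw_hdist[OF f g, of w] e unfolding hdist_def by simp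
  hence "{i. i < N \<and> f i \<noteq> g i} = {}" unfolding qdist_def by simp
  hence "\<forall>i<N. f i = g i" by auto
  moreover have "\<forall>i\<ge>N. f i = g i" using f g unfolding qwords_def by auto
  ultimately show "f = g" by (metis not_le ext)
qed

lemma Gw_mem:
  assumes f: "f \<in> qwords q (n * w)" and w: "0 < w"
  shows "Gw q w (n * w) f \<in> Jmat (q * w) n w"
proof -
  have sub: "Gw q w (n * w) f \<subseteq> {..<q * w} \<times> {..<n}"
  proof
    fix x assume "x \<in> Gw q w (n * w) f"
    then obtain t where t: "t < n * w" "x = ((t mod w) * q + f t, t div w)" unfolding Gw_def by auto
    have ft: "f t < q" using f t unfolding qwords_def by auto
    have "t mod w + 1 \<le> w" using w by (simp add: Suc_le_eq)
    hence "(t mod w + 1) * q \<le> w * q" by (rule mult_le_mono1)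
    hence a: "(t mod w) * q + f t < q * w" using ft by (simp add: algebra_simps)
    have "t div w < n" using t w by (simp add: div_less_iff_less_mult)
    thus "x \<in> {..<q * w} \<times> {..<n}" using a t by auto
  qed
  have "card {i. (i, j) \<in> Gw q w (n * w) f} = w" if j: "j < n" for j
  proof -
    have "{i. (i, j) \<in> Gw q w (n * w) f} = (\<lambda>t. (t mod w) * q + f t) ` {t. t < n * w \<and> t div w = j}"
      unfolding Gw_def by auto
    moreover have "inj_on (\<lambda>t. (t mod w) * q + f t) {t. t < n * w \<and> t div w = j}"
    proof (rule inj_onI)
      fix t t' assume t: "t \<in> {t. t < n * w \<and> t div w = j}" and t': "t' \<in> {t. t < n * w \<and> t div w = j}"
        and e: "(t mod w) * q + f t = (t' mod w) * q + f t'"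
      have ft: "f t < q" and gt: "f t' < q" using f t t' unfolding qwords_def by auto
      from e have "((t mod w) * q + f t) div q = ((t' mod w) * q + f t') div q" by (rule arg_cong)
      hence "t mod w = t' mod w" by (simp only: divmod_q(1)[OF ft] divmod_q(1)[OF gt])
      moreover have "t div w = t' div w" using t t' by simp
      ultimately show "t = t'" using tdm by blast
    qed
    moreover have "{t. t < n * w \<and> t div w = j} = {j * w..<j * w + w}"
    proof
      show "{t. t < n * w \<and> t div w = j} \<subseteq> {j * w..<j * w + w}"
      proof
        fix t assume "t \<in> {t. t < n * w \<and> t div w = j}"
        hence "t div w = j" by simp
        hence "t = j * w + t mod w" using div_mult_mod_eq[of t w] by simp
        moreover have "t mod w < w" using w by simp
        ultimately show "t \<in> {j * w..<j * w + w}" by (simp del: div_mult_mod_eq mod_mult_div_eq)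
      qed
      show "{j * w..<j * w + w} \<subseteq> {t. t < n * w \<and> t div w = j}"
      proof
        fix t assume t: "t \<in> {j * w..<j * w + w}"
        define r where "r = t - j * w"
        have r: "t = j * w + r" "r < w" using t unfolding r_def by auto
        have "(j + 1) * w \<le> n * w" using j by (intro mult_le_mono1) simp
        hence "t < n * w" using r by simp
        moreover have "t div w = j" using r w by simp
        ultimately show "t \<in> {t. t < n * w \<and> t div w = j}" by simp
      qed
    qed
    ultimately show ?thesis by (simp add: card_image)
  qed
  thus ?thesis using sub unfolding Jmat_def by auto
qed

lemma upper_bound:
  fixes m n w d :: nat
  assumes m: "0 < m" and n: "0 < n" and w: "0 < w" and dv: "w dvd m"
  shows "real (A_code m n w d)
              \<le> real (m choose w) ^ n / (real m / real w) ^ (n * w) * real (C_code (m div w) (n * w) d)"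
proof -
  define q where "q = m div w"
  have mq: "m = q * w" using dv unfolding q_def by simp
  have qpos: "0 < q" using m mq by (cases q) auto
  have wm: "w \<le> m" using dv m by (simp add: dvd_imp_le)
  obtain C where C: "C \<subseteq> Jmat m n w" "C \<noteq> {}"
    "\<forall>x\<in>C. \<forall>y\<in>C. x \<noteq> y \<longrightarrow> 2 * d \<le> hdist x y" "card C = A_code m n w d"
    using A_in[OF Jmat_ne[OF wm, of n], where d=d] by auto
  define T where "T = Gw q w (n * w) ` qwords q (n * w)"
  have TJ: "T \<subseteq> Jmat m n w" unfolding T_def mq using Gw_mem[OF _ w] by auto
  have cardT: "card T = q ^ (n * w)"
    unfolding T_def using card_image[OF Gw_inj] card_qwords by simp
  obtain D where D: "D \<subseteq> T" "card C * card T \<le> card D * (m choose w) ^ n"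
    "\<forall>x\<in>D. \<forall>y\<in>D. x \<noteq> y \<longrightarrow> 2 * d \<le> hdist x y"
    using mat_transfer[OF C(1-3) TJ] by blast
  define D' where "D' = {f\<in>qwords q (n * w). Gw q w (n * w) f \<in> D}"
  have cD': "card D' = card D" unfolding D'_def
    by (rule card_pullback[OF Gw_inj]) (use D(1) T_def in simp)
  have codeD': "\<forall>x\<in>D'. \<forall>y\<in>D'. x \<noteq> y \<longrightarrow> d \<le> qdist (n * w) x y"
  proof (intro ballI impI)
    fix f g assume f: "f \<in> D'" and g: "g \<in> D'" and ne: "f \<noteq> g"
    have fq: "f \<in> qwords q (n * w)" and gq: "g \<in> qwords q (n * w)" using f g unfolding D'_def by auto
    have "Gw q w (n * w) f \<noteq> Gw q w (n * w) g" using inj_onD[OF Gw_inj] fq gq ne by blast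
    hence "2 * d \<le> hdist (Gw q w (n * w) f) (Gw q w (n * w) g)" using D(3) f g unfolding D'_def by auto
    thus "d \<le> qdist (n * w) f g" using Gw_hdist[OF fq gq] by simp
  qed
  have finC: "finite C" using C(1) finite_Jmat finite_subset by blast
  have "0 < card C" using finC C(2) by (auto simp: card_gt_0_iff)
  moreover have "0 < card T" using cardT qpos by simp
  ultimately have "0 < card C * card T" by simp
  hence "0 < card D * (m choose w) ^ n" using D(2) by linarith
  hence "0 < card D" by simp
  hence "D' \<noteq> {}" using cD' by auto
  hence Cle: "card D \<le> C_code q (n * w) d"
    using C_ge[of D' q "n * w" d] codeD' cD' unfolding D'_def by auto
  have "card C * q ^ (n * w) \<le> card D * (m choose w) ^ n" using D(2) cardT by simp
  hence "real (card C * q ^ (n * w)) \<le> real (card D * (m choose w) ^ n)"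
    by (simp only: of_nat_le_iff)
  hence "real (card C) * real q ^ (n * w) \<le> real (card D) * real (m choose w) ^ n" by simp
  also have "\<dots> \<le> real (C_code q (n * w) d) * real (m choose w) ^ n"
    using Cle by (intro mult_right_mono) auto
  finally have key: "real (card C) * real q ^ (n * w) \<le> real (m choose w) ^ n * real (C_code q (n * w) d)"
    by (simp add: mult.commute)
  have qq: "real m / real w = real q" using mq w by simp
  have qp: "0 < real q ^ (n * w)" using qpos by simp
  have "real (card C) \<le> real (m choose w) ^ n * real (C_code q (n * w) d) / real q ^ (n * w)"
    using key qp by (simp add: pos_le_divide_eq)
  also have "\<dots> = real (m choose w) ^ n / (real m / real w) ^ (n * w) * real (C_code (m div w) (n * w) d)"
    using qq unfolding q_def by simp
  finally show ?thesis using C(4) by simp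
qed


lemma part1_core:
  fixes mm k n w1 d :: nat
  assumes mm: "0 < mm" and k: "0 < k" and n: "0 < n" and w1: "0 < w1" and wle: "w1 \<le> mm"
  shows "real ((mm choose w1) ^ (n * k)) * real (A_code (k * mm) n (k * w1) d)
         \<le> real (A_code mm (n * k) w1 d) * real (((k * mm) choose (k * w1)) ^ n)"
proof -
  define F where "F = (\<lambda>(i::nat, j::nat). (i + mm * (j mod k), j div k))"
  define A where "A = {..<mm} \<times> (UNIV :: nat set)"
  have dm: "(i + mm * r) div mm = r" "(i + mm * r) mod mm = i" if "i < mm" for i r
    using that by auto
  have injF: "inj_on F A"
  proof (rule inj_onI)
    fix p p' assume p: "p \<in> A" and p': "p' \<in> A" and e: "F p = F p'"
    obtain i j i' j' where pp: "p = (i,j)" "p' = (i',j')" "i < mm" "i' < mm" using p p' unfolding A_def by auto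
    have e1: "i + mm * (j mod k) = i' + mm * (j' mod k)" and e2: "j div k = j' div k"
      using e pp unfolding F_def by auto
    from e1 have "(i + mm * (j mod k)) mod mm = (i' + mm * (j' mod k)) mod mm" by (rule arg_cong)
    hence "i = i'" by (simp only: dm(2)[OF pp(3)] dm(2)[OF pp(4)])
    moreover from e1 have "(i + mm * (j mod k)) div mm = (i' + mm * (j' mod k)) div mm" by (rule arg_cong)
    hence "j mod k = j' mod k" by (simp only: dm(1)[OF pp(3)] dm(1)[OF pp(4)])
    hence "j = j'" using e2 tdm by blast
    ultimately show "p = p'" using pp by simp
  qed
  have JA: "Jmat mm (n * k) w1 \<subseteq> Pow A" unfolding Jmat_def A_def by auto
  have Fmem: "F ` X \<in> Jmat (k * mm) n (k * w1)" if X: "X \<in> Jmat mm (n * k) w1" for X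
  proof -
    have XE: "X \<subseteq> {..<mm} \<times> {..<n * k}" and cX: "\<And>j. j < n * k \<Longrightarrow> card {i. (i,j)\<in>X} = w1"
      using X unfolding Jmat_def by auto
    have sub: "F ` X \<subseteq> {..<k * mm} \<times> {..<n}"
    proof
      fix x assume "x \<in> F ` X"
      then obtain i j where ij: "(i,j) \<in> X" "x = (i + mm * (j mod k), j div k)" unfolding F_def by auto
      have i: "i < mm" and j: "j < n * k" using ij XE by auto
      have "j mod k + 1 \<le> k" using k by (simp add: Suc_le_eq)
      hence "mm * (j mod k + 1) \<le> mm * k" by (rule mult_le_mono2)
      hence a: "i + mm * (j mod k) < k * mm" using i by (simp add: algebra_simps)
      have "j div k < n" using j k by (simp add: div_less_iff_less_mult)
      thus "x \<in> {..<k * mm} \<times> {..<n}" using a ij by auto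
    qed
    have "card {a. (a, j') \<in> F ` X} = k * w1" if j': "j' < n" for j'
    proof -
      have eq: "{a. (a, j') \<in> F ` X} = (\<Union>r\<in>{..<k}. (\<lambda>i. i + mm * r) ` {i. (i, j' * k + r) \<in> X})"
      proof
        show "{a. (a, j') \<in> F ` X} \<subseteq> (\<Union>r\<in>{..<k}. (\<lambda>i. i + mm * r) ` {i. (i, j' * k + r) \<in> X})"
        proof
          fix a assume "a \<in> {a. (a, j') \<in> F ` X}"
          then obtain i j where ij: "(i,j) \<in> X" "a = i + mm * (j mod k)" "j' = j div k" unfolding F_def by auto
          have "j = j' * k + j mod k" using ij(3) div_mult_mod_eq[of j k] by simp
          moreover have "j mod k < k" using k by simp
          ultimately show "a \<in> (\<Union>r\<in>{..<k}. (\<lambda>i. i + mm * r) ` {i. (i, j' * k + r) \<in> X})"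
            using ij by (metis (mono_tags, lifting) UN_iff image_eqI lessThan_iff mem_Collect_eq)
        qed
        show "(\<Union>r\<in>{..<k}. (\<lambda>i. i + mm * r) ` {i. (i, j' * k + r) \<in> X}) \<subseteq> {a. (a, j') \<in> F ` X}"
        proof
          fix a assume "a \<in> (\<Union>r\<in>{..<k}. (\<lambda>i. i + mm * r) ` {i. (i, j' * k + r) \<in> X})"
          then obtain r i where ri: "r < k" "(i, j' * k + r) \<in> X" "a = i + mm * r" by auto
          have "(j' * k + r) mod k = r" "(j' * k + r) div k = j'" using ri(1) by auto
          hence "F (i, j' * k + r) = (a, j')" using ri unfolding F_def by simp
          thus "a \<in> {a. (a, j') \<in> F ` X}" using ri(2) by (metis (mono_tags, lifting) image_eqI mem_Collect_eq)
        qed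
      qed
      have fin: "finite {i. (i, j' * k + r) \<in> X}" for r
        by (rule finite_subset[of _ "{..<mm}"]) (use XE in auto)
      have "card (\<Union>r\<in>{..<k}. (\<lambda>i. i + mm * r) ` {i. (i, j' * k + r) \<in> X})
          = (\<Sum>r\<in>{..<k}. card ((\<lambda>i. i + mm * r) ` {i. (i, j' * k + r) \<in> X}))"
      proof (rule card_UN_disjoint)
        show "\<forall>r\<in>{..<k}. \<forall>r'\<in>{..<k}. r \<noteq> r' \<longrightarrow>
          (\<lambda>i. i + mm * r) ` {i. (i, j' * k + r) \<in> X} \<inter> (\<lambda>i. i + mm * r') ` {i. (i, j' * k + r') \<in> X} = {}"
        proof (intro ballI impI)
          fix r r' :: nat assume "r \<noteq> r'"
          show "(\<lambda>i. i + mm * r) ` {i. (i, j' * k + r) \<in> X} \<inter> (\<lambda>i. i + mm * r') ` {i. (i, j' * k + r') \<in> X} = {}"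
          proof (rule ccontr)
            assume "\<not> ?thesis"
            then obtain i i' where ii: "(i, j' * k + r) \<in> X" "(i', j' * k + r') \<in> X" "i + mm * r = i' + mm * r'"
              by auto
            have "i < mm" "i' < mm" using ii XE by auto
            from ii(3) have "(i + mm * r) div mm = (i' + mm * r') div mm" by (rule arg_cong)
            hence "r = r'" by (simp only: dm(1)[OF \<open>i < mm\<close>] dm(1)[OF \<open>i' < mm\<close>])
            thus False using \<open>r \<noteq> r'\<close> by simp
          qed
        qed
      qed (use fin in auto)
      also have "\<dots> = (\<Sum>r\<in>{..<k}. w1)"
      proof (rule sum.cong)
        fix r assume r: "r \<in> {..<k}"
        have "j' * k + r < n * k"
        proof -
          have "(j' + 1) * k \<le> n * k" using j' by (intro mult_le_mono1) simp
          thus ?thesis using r by simp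
        qed
        moreover have "inj_on (\<lambda>i. i + mm * r) {i. (i, j' * k + r) \<in> X}" by (auto simp: inj_on_def)
        ultimately show "card ((\<lambda>i. i + mm * r) ` {i. (i, j' * k + r) \<in> X}) = w1"
          using cX by (simp add: card_image)
      qed simp
      finally show ?thesis using eq by simp
    qed
    thus ?thesis using sub unfolding Jmat_def by auto
  qed
  define T where "T = image F ` Jmat mm (n * k) w1"
  have TJ: "T \<subseteq> Jmat (k * mm) n (k * w1)" unfolding T_def using Fmem by auto
  have cardT: "card T = (mm choose w1) ^ (n * k)"
    unfolding T_def using card_image[OF inj_on_subset[OF inj_on_image_Pow[OF injF] JA]] card_Jmat by simp
  have wle2: "k * w1 \<le> k * mm" using wle by simp
  obtain C where C: "C \<subseteq> Jmat (k * mm) n (k * w1)" "C \<noteq> {}"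
    "\<forall>x\<in>C. \<forall>y\<in>C. x \<noteq> y \<longrightarrow> 2 * d \<le> hdist x y" "card C = A_code (k * mm) n (k * w1) d"
    using A_in[OF Jmat_ne[OF wle2, of n], where d=d] by auto
  obtain D where D: "D \<subseteq> T" "card C * card T \<le> card D * ((k * mm) choose (k * w1)) ^ n"
    "\<forall>x\<in>D. \<forall>y\<in>D. x \<noteq> y \<longrightarrow> 2 * d \<le> hdist x y"
    using mat_transfer[OF C(1-3) TJ] by blast
  define D' where "D' = {X\<in>Jmat mm (n * k) w1. F`X \<in> D}"
  have DT: "D \<subseteq> image F ` Jmat mm (n * k) w1" using D(1) unfolding T_def .
  note pc = pull_code[OF injF JA DT D(3), folded D'_def]
  have D': "card D' = card D" "\<forall>x\<in>D'. \<forall>y\<in>D'. x \<noteq> y \<longrightarrow> 2 * d \<le> hdist x y"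
    using pc by blast+
  have finC: "finite C" using C(1) finite_Jmat finite_subset by blast
  have "0 < card C" using finC C(2) by (auto simp: card_gt_0_iff)
  moreover have "0 < card T" using cardT wle by simp
  ultimately have "0 < card C * card T" by simp
  hence "0 < card D * ((k * mm) choose (k * w1)) ^ n" using D(2) by linarith
  hence "0 < card D" by simp
  hence "D' \<noteq> {}" using D'(1) by auto
  hence Ale: "card D \<le> A_code mm (n * k) w1 d" using A_ge[of D' mm "n * k" w1 d] D' unfolding D'_def by auto
  have "card C * (mm choose w1) ^ (n * k) \<le> card D * ((k * mm) choose (k * w1)) ^ n" using D(2) cardT by simp
  hence "real (card C * (mm choose w1) ^ (n * k)) \<le> real (card D * ((k * mm) choose (k * w1)) ^ n)"
    by (simp only: of_nat_le_iff)
  hence "real (card C) * real ((mm choose w1) ^ (n * k)) \<le> real (card D) * real (((k * mm) choose (k * w1)) ^ n)"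
    by (simp only: of_nat_mult)
  also have "\<dots> \<le> real (A_code mm (n * k) w1 d) * real (((k * mm) choose (k * w1)) ^ n)"
    using Ale by (intro mult_right_mono) auto
  finally show ?thesis using C(4) by (simp add: mult.commute)
qed

theorem proposition11:
  shows "(\<forall>m n d w1 w2 :: nat. 0 < m \<longrightarrow> 0 < n \<longrightarrow> 0 < d \<longrightarrow> 0 < w1 \<longrightarrow> 0 < w2
            \<longrightarrow> w1 dvd w2 \<longrightarrow> w2 dvd m \<longrightarrow>
            real (A_code (m * w1 div w2) (n * w2 div w1) w1 d)
              \<ge> of_int \<lceil>(real ((m * w1 div w2) choose w1) ^ (n * w2 div w1)
                         / real (m choose w2) ^ n) * real (A_code m n w2 d)\<rceil>)
       \<and> (\<forall>m n w d :: nat. 0 < m \<longrightarrow> 0 < n \<longrightarrow> 0 < w \<longrightarrow> 0 < d \<longrightarrow> w dvd m \<longrightarrow>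
            real (m choose w) ^ n / real ((m * n) choose (w * n)) * real (B_code (m * n) (n * w) d)
              \<le> real (A_code m n w d)
            \<and> real (A_code m n w d)
              \<le> real (m choose w) ^ n / (real m / real w) ^ (n * w) * real (C_code (m div w) (n * w) d))"
proof (intro conjI allI impI)
  fix m n d w1 w2 :: nat
  assume m: "0 < m" and n: "0 < n" and d: "0 < d" and w1: "0 < w1" and w2: "0 < w2"
    and d12: "w1 dvd w2" and d2m: "w2 dvd m"
  obtain k where k: "w2 = w1 * k" using d12 by (auto elim: dvdE)
  obtain l where l: "m = w2 * l" using d2m by (auto elim: dvdE)
  have kp: "0 < k" using k w2 by (cases k) auto
  have lp: "0 < l" using l m by (cases l) auto
  define mm where "mm = l * w1"
  have e1: "m * w1 div w2 = mm"
  proof -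
    have "m * w1 = w2 * mm" unfolding mm_def using l by (simp add: algebra_simps)
    thus ?thesis using w2 by (simp only: nonzero_mult_div_cancel_left[of w2] neq0_conv)
  qed
  have e2: "n * w2 div w1 = n * k"
  proof -
    have "n * w2 = w1 * (n * k)" using k by (simp add: algebra_simps)
    thus ?thesis using w1 by (simp only: nonzero_mult_div_cancel_left[of w1] neq0_conv)
  qed
  have e3: "m = k * mm" "w2 = k * w1" unfolding mm_def using k l by (simp_all add: algebra_simps)
  have mmp: "0 < mm" unfolding mm_def using lp w1 by simp
  have wle: "w1 \<le> mm" unfolding mm_def using lp by simp
  have core: "real ((mm choose w1) ^ (n * k)) * real (A_code m n w2 d)
         \<le> real (A_code mm (n * k) w1 d) * real ((m choose w2) ^ n)"
    using part1_core[OF mmp kp n w1 wle, of d] e3 by simp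
  have bpos: "0 < real (m choose w2) ^ n" using e3 wle by simp
  have "real (mm choose w1) ^ (n * k) / real (m choose w2) ^ n * real (A_code m n w2 d)
       = (real ((mm choose w1) ^ (n * k)) * real (A_code m n w2 d)) / real ((m choose w2) ^ n)" by simp
  also have "\<dots> \<le> real (A_code mm (n * k) w1 d)" using core bpos by (simp add: pos_divide_le_eq)
  finally have le: "real (mm choose w1) ^ (n * k) / real (m choose w2) ^ n * real (A_code m n w2 d)
       \<le> real_of_int (int (A_code mm (n * k) w1 d))" by simp
  have "\<lceil>real (mm choose w1) ^ (n * k) / real (m choose w2) ^ n * real (A_code m n w2 d)\<rceil>
         \<le> int (A_code mm (n * k) w1 d)" using le by (simp only: ceiling_le_iff)
  hence "real_of_int \<lceil>real (mm choose w1) ^ (n * k) / real (m choose w2) ^ n * real (A_code m n w2 d)\<rceil>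
         \<le> real (A_code mm (n * k) w1 d)" by (metis of_int_le_iff of_int_of_nat_eq)
  thus "real_of_int \<lceil>real (m * w1 div w2 choose w1) ^ (n * w2 div w1) / real (m choose w2) ^ n *
                 real (A_code m n w2 d)\<rceil>
           \<le> real (A_code (m * w1 div w2) (n * w2 div w1) w1 d)" unfolding e1 e2 .
next
  fix m n w d :: nat
  assume m: "0 < m" and n: "0 < n" and w: "0 < w" and d: "0 < d" and dv: "w dvd m"
  have wm: "w \<le> m" using dv m by (simp add: dvd_imp_le)
  show "real (m choose w) ^ n / real (m * n choose (w * n)) * real (B_code (m * n) (n * w) d)
       \<le> real (A_code m n w d)" by (rule lower_bound[OF m n w wm])
  show "real (A_code m n w d)
       \<le> real (m choose w) ^ n / (real m / real w) ^ (n * w) * real (C_code (m div w) (n * w) d)"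
    by (rule upper_bound[OF m n w dv])
qed


end
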